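(* Let $R$ be a commutative ring with $\mathbb{Q}\subseteq R$. Let $\mathcal{E}$ (resp. $\mathcal{F}$) be a finitely generated projective module over a commutative unital $R$-algebra $\mathcal{A}$ (resp. $\mathcal{B}$), with a symmetric, strongly nondegenerate, full inner product $\langle\cdot,\cdot\rangle_{\mathcal{E}}$ (resp. $\langle\cdot,\cdot\rangle_{\mathcal{F}}$). Let $\phi:\mathcal{A}\to\mathcal{B}$ be an algebra isomorphism. Let $\Phi:\mathcal{E}\to\mathcal{F}$ be an $R$-linear bijection along $\phi$, i.e. $\Phi(ax)=\phi(a)\Phi(x)$, which is isometric: $\phi(\langle x,y\rangle_{\mathcal{E}})=\langle\Phi(x),\Phi(y)\rangle_{\mathcal{F}}$ for all $x,y\in\mathcal{E}$. Let $\Psi=\Phi^{-1}$. Define $\Phi_*:\mathcal{C}^\bullet(\mathcal{E})\to\mathcal{C}^\bullet(\mathcal{F})$ as follows: - $\Phi_*(a)=\phi(a)$ for $a\in\mathcal{A}$; - $\Phi_*(x)=\Phi(x)$ for $x\in\mathcal{E}$; - $(\Phi_*\mathsf{C})(y_1,\dots,y_{r-1})=\Phi\big(\mathsf{C}(\Psi(y_1),\dots,\Psi(y_{r-1}))\big)$ for $\mathsf{C}\in\mathcal{C}^r(\mathcal{E})$ with $r\ge2$. Then $\Phi_*$ is an isomorphism of graded Poisson algebras $(\mathcal{C}^\bullet(\mathcal{E}),[\cdot,\cdot],\wedge)\to(\mathcal{C}^\bullet(\mathcal{F}),[\cdot,\cdot],\wedge)$.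
   Context: Strongly nondegenerate: the induced map from the module to its $\operatorname{Hom}$-dual is an isomorphism. Full: every algebra element is a finite sum $\sum_i\langle x_i,y_i\rangle$. $\operatorname{Der}(\mathcal{A})$: $R$-linear derivations. $\mathcal{C}^0(\mathcal{E})=\mathcal{A}$ and $\mathcal{C}^1(\mathcal{E})=\mathcal{E}$. For $r\ge2$, $\mathcal{C}^r(\mathcal{E})$ is the set of $\mathsf{C}\in\operatorname{Hom}_R(\mathcal{E}^{\otimes_R(r-1)},\mathcal{E})$ admitting an $R$-multilinear symbol $\sigma_{\mathsf{C}}:\mathcal{E}^{\otimes(r-2)}\to\operatorname{Der}(\mathcal{A})$ with two properties: (1) $\sigma_{\mathsf{C}}(x_1,\dots,x_{r-2})\langle u,w\rangle=\langle\mathsf{C}(x_1,\dots,x_{r-2},u),w\rangle+\langle u,\mathsf{C}(x_1,\dots,x_{r-2},w)\rangle$; (2) for $r\ge3$ and $1\le i\le r-2$, $\langle\mathsf{C}(\dots,x_i,x_{i+1},\dots)+\mathsf{C}(\dots,x_{i+1},x_i,\dots),u\rangle=\sigma_{\mathsf{C}}(x_1,\dots,\widehat{x_i},\widehat{x_{i+1}},\dots,x_{r-1},u)\langle x_i,x_{i+1}\rangle$. The same definitions apply to $\mathcal{F}$ over $\mathcal{B}$. $i_x\mathsf{C}$ inserts $x$ in the first argument. $[\cdot,\cdot]$ is the unique $R$-bilinear graded skew-symmetric map $\mathcal{C}^r\times\mathcal{C}^s\to\mathcal{C}^{r+s-2}$ with: - $[a,b]=0$ and $[a,x]=0=[x,a]$;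 - $[x,y]=\langle x,y\rangle$; - $[\mathsf{D},a]=\sigma_{\mathsf{D}}(a)=-[a,\mathsf{D}]$ for $\mathsf{D}\in\mathcal{C}^2$; - $[\mathsf{C},x]=i_x\mathsf{C}=(-1)^{r+1}[x,\mathsf{C}]$ for $r\ge2$; - $[[\mathsf{C}_1,\mathsf{C}_2],x]=(-1)^s[[\mathsf{C}_1,x],\mathsf{C}_2]+[\mathsf{C}_1,[\mathsf{C}_2,x]]$. $\wedge$ is the unique degree-$0$ $R$-bilinear product with $a\wedge b=ab$, $a\wedge x=ax=x\wedge a$, and $[\mathsf{C}_1\wedge\mathsf{C}_2,x]=(-1)^s[\mathsf{C}_1,x]\wedge\mathsf{C}_2+\mathsf{C}_1\wedge[\mathsf{C}_2,x]$. An isomorphism of graded Poisson algebras is a bijective homogeneous degree-$0$ map compatible with $\wedge$ and $[\cdot,\cdot]$. *)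

theory Defs
  imports Main
begin

definition rhom :: "('r::comm_ring_1 \<Rightarrow> 'a::comm_ring_1) \<Rightarrow> bool" where
  "rhom f \<longleftrightarrow> f 1 = 1 \<and> (\<forall>x y. f (x + y) = f x + f y) \<and> (\<forall>x y. f (x * y) = f x * f y)"

text \<open>E is finitely generated projective over A: a direct summand of A^n.
  A^n is represented by functions nat => A supported in {..<n}.\<close>
definition fg_projective :: "('a::comm_ring_1 \<Rightarrow> 'e::ab_group_add \<Rightarrow> 'e) \<Rightarrow> bool" where
  "fg_projective smul \<longleftrightarrow>
    (\<exists>(n::nat) (i::'e \<Rightarrow> nat \<Rightarrow> 'a) (p::(nat \<Rightarrow> 'a) \<Rightarrow> 'e).
       (\<forall>x y. i (x + y) = (\<lambda>k. i x k + i y k)) \<and>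
       (\<forall>a x. i (smul a x) = (\<lambda>k. a * i x k)) \<and>
       (\<forall>x k. n \<le> k \<longrightarrow> i x k = 0) \<and>
       (\<forall>v w. p (\<lambda>k. v k + w k) = p v + p w) \<and>
       (\<forall>a v. p (\<lambda>k. a * v k) = smul a (p v)) \<and>
       (\<forall>x. p (i x) = x))"

definition is_module :: "('a::comm_ring_1 \<Rightarrow> 'e::ab_group_add \<Rightarrow> 'e) \<Rightarrow> bool" where
  "is_module smul \<longleftrightarrow> (\<forall>a x y. smul a (x + y) = smul a x + smul a y) \<and>
     (\<forall>a b x. smul (a + b) x = smul a x + smul b x) \<and>
     (\<forall>a b x. smul a (smul b x) = smul (a * b) x) \<and> (\<forall>x. smul 1 x = x)"

definition Alin :: "('a::comm_ring_1 \<Rightarrow> 'e::ab_group_add \<Rightarrow> 'e) \<Rightarrow> ('e \<Rightarrow> 'a) \<Rightarrow> bool" where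
  "Alin smul g \<longleftrightarrow> (\<forall>x y. g (x + y) = g x + g y) \<and> (\<forall>a x. g (smul a x) = a * g x)"

definition ipmod :: "('a::comm_ring_1 \<Rightarrow> 'e::ab_group_add \<Rightarrow> 'e) \<Rightarrow> ('e \<Rightarrow> 'e \<Rightarrow> 'a) \<Rightarrow> bool" where
  "ipmod smul ip \<longleftrightarrow>
     is_module smul \<and> fg_projective smul \<and>
     (\<forall>x. Alin smul (ip x)) \<and> (\<forall>y. Alin smul (\<lambda>x. ip x y)) \<and>
     (\<forall>x y. ip x y = ip y x) \<and>
     (\<forall>g. Alin smul g \<longrightarrow> (\<exists>!x. ip x = g)) \<and>
     (\<forall>a. \<exists>ps :: ('e \<times> 'e) list. a = sum_list (map (\<lambda>(x, y). ip x y) ps))"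

definition is_der :: "('r::comm_ring_1 \<Rightarrow> 'a::comm_ring_1) \<Rightarrow> ('a \<Rightarrow> 'a) \<Rightarrow> bool" where
  "is_der \<iota> \<delta> \<longleftrightarrow> (\<forall>a b. \<delta> (a + b) = \<delta> a + \<delta> b) \<and> (\<forall>c a. \<delta> (\<iota> c * a) = \<iota> c * \<delta> a) \<and>
                  (\<forall>a b. \<delta> (a * b) = a * \<delta> b + b * \<delta> a)"

text \<open>R-multilinear maps of k arguments, represented as functions on lists that
  vanish on lists of the wrong length.\<close>
definition multilin :: "('r \<Rightarrow> 'e \<Rightarrow> 'e) \<Rightarrow> ('r \<Rightarrow> 'v \<Rightarrow> 'v) \<Rightarrow> nat \<Rightarrow> ('e::ab_group_add list \<Rightarrow> 'v::ab_group_add) \<Rightarrow> bool" where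
  "multilin se sv k f \<longleftrightarrow>
     (\<forall>xs. length xs \<noteq> k \<longrightarrow> f xs = 0) \<and>
     (\<forall>xs ys x y. length xs + length ys + 1 = k \<longrightarrow> f (xs @ (x + y) # ys) = f (xs @ x # ys) + f (xs @ y # ys)) \<and>
     (\<forall>xs ys x c. length xs + length ys + 1 = k \<longrightarrow> f (xs @ se c x # ys) = sv c (f (xs @ x # ys)))"

text \<open>sigma is a symbol for C in C^r(E) (r >= 2): an R-multilinear map E^(r-2) -> Der(A)
  (written uncurried: sigma xs a) with properties (1) and (2).\<close>
definition is_symbol :: "('r::comm_ring_1 \<Rightarrow> 'a::comm_ring_1) \<Rightarrow> ('a \<Rightarrow> 'e::ab_group_add \<Rightarrow> 'e) \<Rightarrow> ('e \<Rightarrow> 'e \<Rightarrow> 'a)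
     \<Rightarrow> nat \<Rightarrow> ('e list \<Rightarrow> 'e) \<Rightarrow> ('e list \<Rightarrow> 'a \<Rightarrow> 'a) \<Rightarrow> bool" where
  "is_symbol \<iota> smul ip r C \<sigma> \<longleftrightarrow>
     (\<forall>a. multilin (\<lambda>c x. smul (\<iota> c) x) (\<lambda>c b. \<iota> c * b) (r - 2) (\<lambda>xs. \<sigma> xs a)) \<and>
     (\<forall>xs. length xs = r - 2 \<longrightarrow> is_der \<iota> (\<sigma> xs)) \<and>
     (\<forall>xs u w. length xs = r - 2 \<longrightarrow> \<sigma> xs (ip u w) = ip (C (xs @ [u])) w + ip u (C (xs @ [w]))) \<and>
     (\<forall>xs ys x y u. length xs + length ys + 2 = r - 1 \<longrightarrow>
        ip (C (xs @ x # y # ys) + C (xs @ y # x # ys)) u = \<sigma> (xs @ ys @ [u]) (ip x y))"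

text \<open>Elements: Sc a (degree 0), Vc x (degree 1), Op C (degree r >= 2, C of arity r-1).
  Degrees are tracked explicitly; C^r = {0} (represented by Sc 0) for r < 0.\<close>
datatype ('a, 'e) coch = Sc 'a | Vc 'e | Op "'e list \<Rightarrow> 'e"

definition Cset :: "('r::comm_ring_1 \<Rightarrow> 'a::comm_ring_1) \<Rightarrow> ('a \<Rightarrow> 'e::ab_group_add \<Rightarrow> 'e) \<Rightarrow> ('e \<Rightarrow> 'e \<Rightarrow> 'a)
     \<Rightarrow> int \<Rightarrow> ('a, 'e) coch set" where
  "Cset \<iota> smul ip r =
     (if r < 0 then {Sc 0}
      else if r = 0 then range Sc
      else if r = 1 then range Vc
      else {Op C | C. multilin (\<lambda>c x. smul (\<iota> c) x) (\<lambda>c x. smul (\<iota> c) x) (nat r - 1) C \<and>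
                      (\<exists>\<sigma>. is_symbol \<iota> smul ip (nat r) C \<sigma>)})"

fun cadd :: "('a::comm_ring_1, 'e::ab_group_add) coch \<Rightarrow> ('a, 'e) coch \<Rightarrow> ('a, 'e) coch" where
  "cadd (Sc a) (Sc b) = Sc (a + b)"
| "cadd (Vc x) (Vc y) = Vc (x + y)"
| "cadd (Op f) (Op g) = Op (\<lambda>xs. f xs + g xs)"
| "cadd _ _ = Sc 0"

fun cscale :: "('r \<Rightarrow> 'a::comm_ring_1) \<Rightarrow> ('a \<Rightarrow> 'e::ab_group_add \<Rightarrow> 'e) \<Rightarrow> 'r \<Rightarrow> ('a, 'e) coch \<Rightarrow> ('a, 'e) coch" where
  "cscale \<iota> smul c (Sc a) = Sc (\<iota> c * a)"
| "cscale \<iota> smul c (Vc x) = Vc (smul (\<iota> c) x)"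
| "cscale \<iota> smul c (Op f) = Op (\<lambda>xs. smul (\<iota> c) (f xs))"

fun cneg :: "('a::comm_ring_1, 'e::ab_group_add) coch \<Rightarrow> ('a, 'e) coch" where
  "cneg (Sc a) = Sc (- a)"
| "cneg (Vc x) = Vc (- x)"
| "cneg (Op f) = Op (\<lambda>xs. - f xs)"

definition csign :: "int \<Rightarrow> ('a::comm_ring_1, 'e::ab_group_add) coch \<Rightarrow> ('a, 'e) coch" where
  "csign k C = (if even k then C else cneg C)"

fun cins :: "nat \<Rightarrow> 'e \<Rightarrow> ('a::comm_ring_1, 'e::ab_group_add) coch \<Rightarrow> ('a, 'e) coch" where
  "cins r x (Op f) = (if r = 2 then Vc (f [x]) else Op (\<lambda>xs. f (x # xs)))"
| "cins r x _ = Sc 0"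

definition is_bracket :: "('r::comm_ring_1 \<Rightarrow> 'a::comm_ring_1) \<Rightarrow> ('a \<Rightarrow> 'e::ab_group_add \<Rightarrow> 'e) \<Rightarrow> ('e \<Rightarrow> 'e \<Rightarrow> 'a)
     \<Rightarrow> (int \<Rightarrow> int \<Rightarrow> ('a, 'e) coch \<Rightarrow> ('a, 'e) coch \<Rightarrow> ('a, 'e) coch) \<Rightarrow> bool" where
  "is_bracket \<iota> smul ip br \<longleftrightarrow>
    (let Cs = Cset \<iota> smul ip in
     (\<forall>r s C1 C2. C1 \<in> Cs r \<longrightarrow> C2 \<in> Cs s \<longrightarrow> br r s C1 C2 \<in> Cs (r + s - 2)) \<and>
     (\<forall>r s C1 C1' C2. C1 \<in> Cs r \<longrightarrow> C1' \<in> Cs r \<longrightarrow> C2 \<in> Cs s \<longrightarrow>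
         br r s (cadd C1 C1') C2 = cadd (br r s C1 C2) (br r s C1' C2)) \<and>
     (\<forall>r s C1 C2 C2'. C1 \<in> Cs r \<longrightarrow> C2 \<in> Cs s \<longrightarrow> C2' \<in> Cs s \<longrightarrow>
         br r s C1 (cadd C2 C2') = cadd (br r s C1 C2) (br r s C1 C2')) \<and>
     (\<forall>r s C1 C2 c. C1 \<in> Cs r \<longrightarrow> C2 \<in> Cs s \<longrightarrow>
         br r s (cscale \<iota> smul c C1) C2 = cscale \<iota> smul c (br r s C1 C2) \<and>
         br r s C1 (cscale \<iota> smul c C2) = cscale \<iota> smul c (br r s C1 C2)) \<and>
     (\<forall>r s C1 C2. C1 \<in> Cs r \<longrightarrow> C2 \<in> Cs s \<longrightarrow> br r s C1 C2 = csign (r * s + 1) (br s r C2 C1)) \<and>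
     (\<forall>a b. br 0 0 (Sc a) (Sc b) = Sc 0) \<and>
     (\<forall>a x. br 0 1 (Sc a) (Vc x) = Sc 0 \<and> br 1 0 (Vc x) (Sc a) = Sc 0) \<and>
     (\<forall>x y. br 1 1 (Vc x) (Vc y) = Sc (ip x y)) \<and>
     (\<forall>f \<sigma> a. Op f \<in> Cs 2 \<longrightarrow> is_symbol \<iota> smul ip 2 f \<sigma> \<longrightarrow>
         br 2 0 (Op f) (Sc a) = Sc (\<sigma> [] a) \<and> br 0 2 (Sc a) (Op f) = Sc (- \<sigma> [] a)) \<and>
     (\<forall>r C x. 2 \<le> r \<longrightarrow> C \<in> Cs r \<longrightarrow>
         br r 1 C (Vc x) = cins (nat r) x C \<and> cins (nat r) x C = csign (r + 1) (br 1 r (Vc x) C)) \<and>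
     (\<forall>r s C1 C2 x. C1 \<in> Cs r \<longrightarrow> C2 \<in> Cs s \<longrightarrow>
         br (r + s - 2) 1 (br r s C1 C2) (Vc x) =
           cadd (csign s (br (r - 1) s (br r 1 C1 (Vc x)) C2)) (br r (s - 1) C1 (br s 1 C2 (Vc x)))))"

definition is_wedge :: "('r::comm_ring_1 \<Rightarrow> 'a::comm_ring_1) \<Rightarrow> ('a \<Rightarrow> 'e::ab_group_add \<Rightarrow> 'e) \<Rightarrow> ('e \<Rightarrow> 'e \<Rightarrow> 'a)
     \<Rightarrow> (int \<Rightarrow> int \<Rightarrow> ('a, 'e) coch \<Rightarrow> ('a, 'e) coch \<Rightarrow> ('a, 'e) coch)
     \<Rightarrow> (int \<Rightarrow> int \<Rightarrow> ('a, 'e) coch \<Rightarrow> ('a, 'e) coch \<Rightarrow> ('a, 'e) coch) \<Rightarrow> bool" where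
  "is_wedge \<iota> smul ip br wd \<longleftrightarrow>
    (let Cs = Cset \<iota> smul ip in
     (\<forall>r s C1 C2. C1 \<in> Cs r \<longrightarrow> C2 \<in> Cs s \<longrightarrow> wd r s C1 C2 \<in> Cs (r + s)) \<and>
     (\<forall>r s C1 C1' C2. C1 \<in> Cs r \<longrightarrow> C1' \<in> Cs r \<longrightarrow> C2 \<in> Cs s \<longrightarrow>
         wd r s (cadd C1 C1') C2 = cadd (wd r s C1 C2) (wd r s C1' C2)) \<and>
     (\<forall>r s C1 C2 C2'. C1 \<in> Cs r \<longrightarrow> C2 \<in> Cs s \<longrightarrow> C2' \<in> Cs s \<longrightarrow>
         wd r s C1 (cadd C2 C2') = cadd (wd r s C1 C2) (wd r s C1 C2')) \<and>
     (\<forall>r s C1 C2 c. C1 \<in> Cs r \<longrightarrow> C2 \<in> Cs s \<longrightarrow>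
         wd r s (cscale \<iota> smul c C1) C2 = cscale \<iota> smul c (wd r s C1 C2) \<and>
         wd r s C1 (cscale \<iota> smul c C2) = cscale \<iota> smul c (wd r s C1 C2)) \<and>
     (\<forall>a b. wd 0 0 (Sc a) (Sc b) = Sc (a * b)) \<and>
     (\<forall>a x. wd 0 1 (Sc a) (Vc x) = Vc (smul a x) \<and> wd 1 0 (Vc x) (Sc a) = Vc (smul a x)) \<and>
     (\<forall>r s C1 C2 x. C1 \<in> Cs r \<longrightarrow> C2 \<in> Cs s \<longrightarrow>
         br (r + s) 1 (wd r s C1 C2) (Vc x) =
           cadd (csign s (wd (r - 1) s (br r 1 C1 (Vc x)) C2)) (wd r (s - 1) C1 (br s 1 C2 (Vc x)))))"

fun Phistar :: "('a \<Rightarrow> 'b) \<Rightarrow> ('e \<Rightarrow> 'f) \<Rightarrow> ('a, 'e) coch \<Rightarrow> ('b, 'f) coch" where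
  "Phistar \<phi> \<Phi> (Sc a) = Sc (\<phi> a)"
| "Phistar \<phi> \<Phi> (Vc x) = Vc (\<Phi> x)"
| "Phistar \<phi> \<Phi> (Op C) = Op (\<lambda>ys. \<Phi> (C (map (inv \<Phi>) ys)))"

end

theory Submission
  imports Defs
begin

lemma rhom_0: "rhom f \<Longrightarrow> f 0 = 0"
  unfolding rhom_def by (metis add_cancel_right_right add_0)
lemma rhom_add: "rhom f \<Longrightarrow> f (x+y) = f x + f y" by (simp add: rhom_def)
lemma rhom_mult: "rhom f \<Longrightarrow> f (x*y) = f x * f y" by (simp add: rhom_def)
lemma rhom_neg: "rhom f \<Longrightarrow> f (-x) = - f x"
  by (metis add.right_inverse add_eq_0_iff rhom_0 rhom_add)

lemma Cset_neg: "k < 0 \<Longrightarrow> Cset \<iota> smul ip k = {Sc 0}" by (simp add: Cset_def)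
lemma Cset_0: "Cset \<iota> smul ip 0 = range Sc" by (simp add: Cset_def)
lemma Cset_1: "Cset \<iota> smul ip 1 = range Vc" by (simp add: Cset_def)
lemma Cset_ge2: "2 \<le> k \<Longrightarrow> Cset \<iota> smul ip k = {Op C | C. multilin (\<lambda>c x. smul (\<iota> c) x) (\<lambda>c x. smul (\<iota> c) x) (nat k - 1) C \<and>
                      (\<exists>\<sigma>. is_symbol \<iota> smul ip (nat k) C \<sigma>)}" by (simp add: Cset_def)

definition czero :: "int \<Rightarrow> ('a::comm_ring_1, 'e::ab_group_add) coch" where
  "czero k = (if k \<le> 0 then Sc 0 else if k = 1 then Vc 0 else Op (\<lambda>_. 0))"

lemma zero_unique:
  assumes "D \<in> Cset \<iota> smul ip k" "cadd D D = D" shows "D = czero k"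
proof -
  consider "k < 0" | "k = 0" | "k = 1" | "2 \<le> k" by linarith
  then show ?thesis
  proof cases
    case 1 then show ?thesis using assms by (simp add: Cset_neg czero_def)
  next
    case 2 then show ?thesis using assms by (auto simp: Cset_0 czero_def)
  next
    case 3 then show ?thesis using assms by (auto simp: Cset_1 czero_def)
  next
    case 4
    then obtain f where f: "D = Op f" using assms by (auto simp: Cset_ge2)
    with assms have "\<And>xs. f xs + f xs = f xs" by (simp add: fun_eq_iff)
    then have "f = (\<lambda>_. 0)" by (simp add: fun_eq_iff)
    then show ?thesis using 4 f by (simp add: czero_def)
  qed
qed

lemma cneg_cneg[simp]: "cneg (cneg D) = D" by (cases D) auto
lemma csign_csign: "csign k (csign k D) = D" by (simp add: csign_def)

context
  fixes \<iota> smul ip br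
  assumes B: "is_bracket \<iota> smul ip br"
begin
lemmas Bs = B[unfolded is_bracket_def Let_def]
lemma br_closed: "C1 \<in> Cset \<iota> smul ip r \<Longrightarrow> C2 \<in> Cset \<iota> smul ip s \<Longrightarrow> br r s C1 C2 \<in> Cset \<iota> smul ip (r+s-2)"
  using conjunct1[OF Bs] by blast
lemma br_addL: "C1 \<in> Cset \<iota> smul ip r \<Longrightarrow> C1' \<in> Cset \<iota> smul ip r \<Longrightarrow> C2 \<in> Cset \<iota> smul ip s \<Longrightarrow>
   br r s (cadd C1 C1') C2 = cadd (br r s C1 C2) (br r s C1' C2)"
  using conjunct1[OF conjunct2[OF Bs]] by blast
lemma br_addR: "C1 \<in> Cset \<iota> smul ip r \<Longrightarrow> C2 \<in> Cset \<iota> smul ip s \<Longrightarrow> C2' \<in> Cset \<iota> smul ip s \<Longrightarrow>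
   br r s C1 (cadd C2 C2') = cadd (br r s C1 C2) (br r s C1 C2')"
  using conjunct1[OF conjunct2[OF conjunct2[OF Bs]]] by blast
lemma br11: "br 1 1 (Vc x) (Vc y) = Sc (ip x y)"
  using conjunct1[OF conjunct2[OF conjunct2[OF conjunct2[OF conjunct2[OF conjunct2[OF conjunct2[OF conjunct2[OF Bs]]]]]]]] by blast
lemma br20: "Op f \<in> Cset \<iota> smul ip 2 \<Longrightarrow> is_symbol \<iota> smul ip 2 f \<sigma> \<Longrightarrow>
         br 2 0 (Op f) (Sc a) = Sc (\<sigma> [] a) \<and> br 0 2 (Sc a) (Op f) = Sc (- \<sigma> [] a)"
  using conjunct1[OF conjunct2[OF conjunct2[OF conjunct2[OF conjunct2[OF conjunct2[OF conjunct2[OF conjunct2[OF conjunct2[OF Bs]]]]]]]]] by blast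
lemma brins: "2 \<le> r \<Longrightarrow> C \<in> Cset \<iota> smul ip r \<Longrightarrow> br r 1 C (Vc x) = cins (nat r) x C"
  using conjunct1[OF conjunct2[OF conjunct2[OF conjunct2[OF conjunct2[OF conjunct2[OF conjunct2[OF conjunct2[OF conjunct2[OF conjunct2[OF Bs]]]]]]]]]] by blast
lemma brder: "C1 \<in> Cset \<iota> smul ip r \<Longrightarrow> C2 \<in> Cset \<iota> smul ip s \<Longrightarrow>
         br (r + s - 2) 1 (br r s C1 C2) (Vc x) =
           cadd (csign s (br (r - 1) s (br r 1 C1 (Vc x)) C2)) (br r (s - 1) C1 (br s 1 C2 (Vc x)))"
  using conjunct2[OF conjunct2[OF conjunct2[OF conjunct2[OF conjunct2[OF conjunct2[OF conjunct2[OF conjunct2[OF conjunct2[OF conjunct2[OF Bs]]]]]]]]]] by blast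

lemma br_zeroL: assumes "r < 0" "C1 \<in> Cset \<iota> smul ip r" "C2 \<in> Cset \<iota> smul ip s"
  shows "br r s C1 C2 = czero (r+s-2)"
proof -
  have c1: "C1 = Sc 0" using assms by (simp add: Cset_neg)
  have "cadd C1 C1 = C1" using c1 by simp
  then have "br r s C1 C2 = cadd (br r s C1 C2) (br r s C1 C2)"
    using br_addL[OF assms(2) assms(2) assms(3)] by simp
  then show ?thesis using zero_unique br_closed[OF assms(2,3)] by metis
qed
lemma br_zeroR: assumes "s < 0" "C1 \<in> Cset \<iota> smul ip r" "C2 \<in> Cset \<iota> smul ip s"
  shows "br r s C1 C2 = czero (r+s-2)"
proof -
  have c1: "C2 = Sc 0" using assms by (simp add: Cset_neg)
  have "cadd C2 C2 = C2" using c1 by simp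
  then have "br r s C1 C2 = cadd (br r s C1 C2) (br r s C1 C2)"
    using br_addR[OF assms(2) assms(3) assms(3)] by simp
  then show ?thesis using zero_unique br_closed[OF assms(2,3)] by metis
qed

lemma determined:
  assumes M: "ipmod smul ip" and k: "1 \<le> k" and D: "D \<in> Cset \<iota> smul ip k" and D': "D' \<in> Cset \<iota> smul ip k"
    and eq: "\<forall>y. br k 1 D (Vc y) = br k 1 D' (Vc y)"
  shows "D = D'"
proof (cases "k = 1")
  case True
  then obtain x x' where xx: "D = Vc x" "D' = Vc x'" using D D' by (auto simp: Cset_1)
  then have "ip x = ip x'" using eq True by (auto simp: br11 fun_eq_iff)
  moreover have "Alin smul (ip x)" using M by (simp add: ipmod_def)
  moreover have "\<forall>g. Alin smul g \<longrightarrow> (\<exists>!x. ip x = g)" using M by (simp add: ipmod_def)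
  ultimately have "x = x'" by metis
  then show ?thesis using xx by simp
next
  case False
  then have k2: "2 \<le> k" using k by simp
  obtain f g where fg: "D = Op f" "D' = Op g" and mf: "multilin (\<lambda>c x. smul (\<iota> c) x) (\<lambda>c x. smul (\<iota> c) x) (nat k - 1) f"
    and mg: "multilin (\<lambda>c x. smul (\<iota> c) x) (\<lambda>c x. smul (\<iota> c) x) (nat k - 1) g"
    using D D' k2 by (auto simp: Cset_ge2)
  have ins: "cins (nat k) y D = cins (nat k) y D'" for y
    using eq brins[OF k2 D] brins[OF k2 D'] by metis
  show ?thesis
  proof (cases "nat k = 2")
    case True
    then have 1: "f [y] = g [y]" for y using ins[of y] fg by simp
    have "f xs = g xs" for xs
    proof (cases "length xs = 1")
      case True then obtain y where "xs = [y]" by (cases xs) auto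
      then show ?thesis using 1 by simp
    next
      case False then show ?thesis using mf mg \<open>nat k = 2\<close> by (simp add: multilin_def)
    qed
    then show ?thesis using fg by (simp add: fun_eq_iff)
  next
    case False
    then have 1: "f (y # xs) = g (y # xs)" for y xs using ins[of y] fg k2 by (simp add: fun_eq_iff)
    have "f [] = g []" using mf mg k2 by (simp add: multilin_def)
    then have "f xs = g xs" for xs using 1 by (cases xs) auto
    then show ?thesis using fg by (simp add: fun_eq_iff)
  qed
qed
end

context
  fixes \<iota> smul ip br wd
  assumes W: "is_wedge \<iota> smul ip br wd"
begin
lemmas Ws = W[unfolded is_wedge_def Let_def]
lemma wd_closed: "C1 \<in> Cset \<iota> smul ip r \<Longrightarrow> C2 \<in> Cset \<iota> smul ip s \<Longrightarrow> wd r s C1 C2 \<in> Cset \<iota> smul ip (r+s)"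
  using conjunct1[OF Ws] by blast
lemma wd_addL: "C1 \<in> Cset \<iota> smul ip r \<Longrightarrow> C1' \<in> Cset \<iota> smul ip r \<Longrightarrow> C2 \<in> Cset \<iota> smul ip s \<Longrightarrow>
   wd r s (cadd C1 C1') C2 = cadd (wd r s C1 C2) (wd r s C1' C2)"
  using conjunct1[OF conjunct2[OF Ws]] by blast
lemma wd_addR: "C1 \<in> Cset \<iota> smul ip r \<Longrightarrow> C2 \<in> Cset \<iota> smul ip s \<Longrightarrow> C2' \<in> Cset \<iota> smul ip s \<Longrightarrow>
   wd r s C1 (cadd C2 C2') = cadd (wd r s C1 C2) (wd r s C1 C2')"
  using conjunct1[OF conjunct2[OF conjunct2[OF Ws]]] by blast
lemma wd00: "wd 0 0 (Sc a) (Sc b) = Sc (a * b)"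
  using conjunct1[OF conjunct2[OF conjunct2[OF conjunct2[OF conjunct2[OF Ws]]]]] by blast
lemma wdder: "C1 \<in> Cset \<iota> smul ip r \<Longrightarrow> C2 \<in> Cset \<iota> smul ip s \<Longrightarrow>
         br (r + s) 1 (wd r s C1 C2) (Vc x) =
           cadd (csign s (wd (r - 1) s (br r 1 C1 (Vc x)) C2)) (wd r (s - 1) C1 (br s 1 C2 (Vc x)))"
  using conjunct2[OF conjunct2[OF conjunct2[OF conjunct2[OF conjunct2[OF conjunct2[OF Ws]]]]]] by blast
lemma wd_zeroL: assumes "r < 0" "C1 \<in> Cset \<iota> smul ip r" "C2 \<in> Cset \<iota> smul ip s"
  shows "wd r s C1 C2 = czero (r+s)"
proof -
  have c1: "C1 = Sc 0" using assms by (simp add: Cset_neg)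
  have "cadd C1 C1 = C1" using c1 by simp
  then have "wd r s C1 C2 = cadd (wd r s C1 C2) (wd r s C1 C2)"
    using wd_addL[OF assms(2) assms(2) assms(3)] by simp
  then show ?thesis using zero_unique wd_closed[OF assms(2,3)] by metis
qed
lemma wd_zeroR: assumes "s < 0" "C1 \<in> Cset \<iota> smul ip r" "C2 \<in> Cset \<iota> smul ip s"
  shows "wd r s C1 C2 = czero (r+s)"
proof -
  have c1: "C2 = Sc 0" using assms by (simp add: Cset_neg)
  have "cadd C2 C2 = C2" using c1 by simp
  then have "wd r s C1 C2 = cadd (wd r s C1 C2) (wd r s C1 C2)"
    using wd_addR[OF assms(2) assms(3) assms(3)] by simp
  then show ?thesis using zero_unique wd_closed[OF assms(2,3)] by metis
qed
end

locale transp =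
  fixes \<iota>A :: "'r::comm_ring_1 \<Rightarrow> 'a::comm_ring_1" and \<iota>B :: "'r \<Rightarrow> 'b::comm_ring_1"
    and smulE :: "'a \<Rightarrow> 'e::ab_group_add \<Rightarrow> 'e" and ipE :: "'e \<Rightarrow> 'e \<Rightarrow> 'a"
    and smulF :: "'b \<Rightarrow> 'f::ab_group_add \<Rightarrow> 'f" and ipF :: "'f \<Rightarrow> 'f \<Rightarrow> 'b"
    and \<phi> :: "'a \<Rightarrow> 'b" and \<Phi> :: "'e \<Rightarrow> 'f"
  assumes phi_bij: "bij \<phi>" and phi_hom: "rhom \<phi>" and phi_R: "\<forall>c. \<phi> (\<iota>A c) = \<iota>B c"
    and Phi_bij: "bij \<Phi>"
    and Phi_add: "\<forall>x y. \<Phi> (x + y) = \<Phi> x + \<Phi> y"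
    and Phi_along: "\<forall>a x. \<Phi> (smulE a x) = smulF (\<phi> a) (\<Phi> x)"
    and Phi_isom: "\<forall>x y. \<phi> (ipE x y) = ipF (\<Phi> x) (\<Phi> y)"
begin

abbreviation "\<Psi> \<equiv> inv \<Phi>"
abbreviation "phii \<equiv> inv \<phi>"

lemma Phi_Psi[simp]: "\<Phi> (\<Psi> y) = y" using Phi_bij by (meson bij_inv_eq_iff)
lemma Psi_Phi[simp]: "\<Psi> (\<Phi> x) = x" using Phi_bij by (simp add: bij_is_inj inv_f_f)
lemma phi_phii[simp]: "\<phi> (phii y) = y" using phi_bij by (meson bij_inv_eq_iff)
lemma phii_phi[simp]: "phii (\<phi> x) = x" using phi_bij by (simp add: bij_is_inj inv_f_f)
lemma Phi_inj: "\<Phi> x = \<Phi> y \<longleftrightarrow> x = y" by (metis Psi_Phi)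
lemma phi_inj: "\<phi> x = \<phi> y \<longleftrightarrow> x = y" by (metis phii_phi)

lemma Phi_addr[simp]: "\<Phi> (x + y) = \<Phi> x + \<Phi> y" using Phi_add by blast
lemma Phi_0[simp]: "\<Phi> 0 = 0" by (metis Phi_addr add_cancel_right_right add_0)
lemma Phi_neg[simp]: "\<Phi> (-x) = - \<Phi> x" by (metis Phi_addr Phi_0 add.right_inverse add_eq_0_iff)
lemma phi_0[simp]: "\<phi> 0 = 0" using phi_hom by (rule rhom_0)
lemma phi_add[simp]: "\<phi> (x+y) = \<phi> x + \<phi> y" using phi_hom by (rule rhom_add)
lemma phi_mult[simp]: "\<phi> (x*y) = \<phi> x * \<phi> y" using phi_hom by (rule rhom_mult)
lemma phi_neg[simp]: "\<phi> (-x) = - \<phi> x" using phi_hom by (rule rhom_neg)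
lemma phi_Rr[simp]: "\<phi> (\<iota>A c) = \<iota>B c" using phi_R by blast
lemma Phi_alongr[simp]: "\<Phi> (smulE a x) = smulF (\<phi> a) (\<Phi> x)" using Phi_along by blast
lemma Phi_isomr[simp]: "\<phi> (ipE x y) = ipF (\<Phi> x) (\<Phi> y)" using Phi_isom by blast

lemma Psi_add: "\<Psi> (x+y) = \<Psi> x + \<Psi> y" by (metis Phi_addr Psi_Phi Phi_Psi)
lemma phii_add: "phii (x+y) = phii x + phii y" by (metis phi_add phii_phi phi_phii)
lemma phii_mult: "phii (x*y) = phii x * phii y" by (metis phi_mult phii_phi phi_phii)
lemma phii_R: "phii (\<iota>B c) = \<iota>A c" by (metis phi_Rr phii_phi)
lemma Psi_along: "\<Psi> (smulF b y) = smulE (phii b) (\<Psi> y)" by (metis Phi_alongr Psi_Phi Phi_Psi phi_phii)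
lemma Psi_isom: "phii (ipF x y) = ipE (\<Psi> x) (\<Psi> y)" by (metis Phi_isomr phii_phi Phi_Psi)
lemma phii_hom: "rhom phii"
  unfolding rhom_def using phii_add phii_mult by (metis phii_phi phi_hom rhom_def)

lemma transp_inv: "transp \<iota>B \<iota>A smulF ipF smulE ipE phii \<Psi>"
  unfolding transp_def
  using bij_imp_bij_inv[OF phi_bij] bij_imp_bij_inv[OF Phi_bij] phii_hom phii_R Psi_add Psi_along Psi_isom by blast

lemma Psi_alongR: "\<Psi> (smulF (\<iota>B c) y) = smulE (\<iota>A c) (\<Psi> y)" by (simp add: Psi_along phii_R)

lemma multilin_tr:
  assumes "multilin (\<lambda>c x. smulE (\<iota>A c) x) (\<lambda>c x. smulE (\<iota>A c) x) k f"
  shows "multilin (\<lambda>c x. smulF (\<iota>B c) x) (\<lambda>c x. smulF (\<iota>B c) x) k (\<lambda>ys. \<Phi> (f (map \<Psi> ys)))"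
  unfolding multilin_def
proof (intro conjI allI impI)
  fix xs :: "'f list" assume "length xs \<noteq> k"
  then show "\<Phi> (f (map \<Psi> xs)) = 0" using assms by (simp add: multilin_def)
next
  fix xs ys :: "'f list" and x y assume "length xs + length ys + 1 = k"
  then show "\<Phi> (f (map \<Psi> (xs @ (x + y) # ys))) = \<Phi> (f (map \<Psi> (xs @ x # ys))) + \<Phi> (f (map \<Psi> (xs @ y # ys)))"
    using assms unfolding multilin_def by (simp add: Psi_add)
next
  fix xs ys :: "'f list" and x c assume "length xs + length ys + 1 = k"
  then show "\<Phi> (f (map \<Psi> (xs @ smulF (\<iota>B c) x # ys))) = smulF (\<iota>B c) (\<Phi> (f (map \<Psi> (xs @ x # ys))))"
    using assms unfolding multilin_def by (simp add: Psi_alongR)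
qed

lemma symbol_tr:
  assumes S: "is_symbol \<iota>A smulE ipE r f \<sigma>"
  shows "is_symbol \<iota>B smulF ipF r (\<lambda>ys. \<Phi> (f (map \<Psi> ys))) (\<lambda>ys b. \<phi> (\<sigma> (map \<Psi> ys) (phii b)))"
  unfolding is_symbol_def
proof (intro conjI allI impI)
  fix a
  have m: "multilin (\<lambda>c x. smulE (\<iota>A c) x) (\<lambda>c b. \<iota>A c * b) (r - 2) (\<lambda>xs. \<sigma> xs (phii a))"
    using S by (simp add: is_symbol_def)
  show "multilin (\<lambda>c x. smulF (\<iota>B c) x) (\<lambda>c b. \<iota>B c * b) (r - 2) (\<lambda>xs. \<phi> (\<sigma> (map \<Psi> xs) (phii a)))"
    unfolding multilin_def
  proof (intro conjI allI impI)
    fix xs :: "'f list" assume "length xs \<noteq> r - 2"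
    then show "\<phi> (\<sigma> (map \<Psi> xs) (phii a)) = 0" using m by (simp add: multilin_def)
  next
    fix xs ys :: "'f list" and x y assume "length xs + length ys + 1 = r - 2"
    then show "\<phi> (\<sigma> (map \<Psi> (xs @ (x + y) # ys)) (phii a)) = \<phi> (\<sigma> (map \<Psi> (xs @ x # ys)) (phii a)) + \<phi> (\<sigma> (map \<Psi> (xs @ y # ys)) (phii a))"
      using m unfolding multilin_def by (simp add: Psi_add)
  next
    fix xs ys :: "'f list" and x c assume "length xs + length ys + 1 = r - 2"
    then show "\<phi> (\<sigma> (map \<Psi> (xs @ smulF (\<iota>B c) x # ys)) (phii a)) = \<iota>B c * \<phi> (\<sigma> (map \<Psi> (xs @ x # ys)) (phii a))"
      using m unfolding multilin_def by (simp add: Psi_alongR)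
  qed
next
  fix xs :: "'f list" assume l: "length xs = r - 2"
  have d: "is_der \<iota>A (\<sigma> (map \<Psi> xs))" using S l by (simp add: is_symbol_def)
  show "is_der \<iota>B (\<lambda>b. \<phi> (\<sigma> (map \<Psi> xs) (phii b)))"
    unfolding is_der_def
  proof (intro conjI allI)
    fix a b show "\<phi> (\<sigma> (map \<Psi> xs) (phii (a + b))) = \<phi> (\<sigma> (map \<Psi> xs) (phii a)) + \<phi> (\<sigma> (map \<Psi> xs) (phii b))"
      using d unfolding is_der_def by (simp add: phii_add)
  next
    fix c a
    have "phii (\<iota>B c * a) = \<iota>A c * phii a" by (simp add: phii_mult phii_R)
    moreover have "\<sigma> (map \<Psi> xs) (\<iota>A c * phii a) = \<iota>A c * \<sigma> (map \<Psi> xs) (phii a)" using d unfolding is_der_def by blast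
    ultimately show "\<phi> (\<sigma> (map \<Psi> xs) (phii (\<iota>B c * a))) = \<iota>B c * \<phi> (\<sigma> (map \<Psi> xs) (phii a))" by simp
  next
    fix a b
    have "\<sigma> (map \<Psi> xs) (phii a * phii b) = phii a * \<sigma> (map \<Psi> xs) (phii b) + phii b * \<sigma> (map \<Psi> xs) (phii a)" using d unfolding is_der_def by blast
    then show "\<phi> (\<sigma> (map \<Psi> xs) (phii (a * b))) = a * \<phi> (\<sigma> (map \<Psi> xs) (phii b)) + b * \<phi> (\<sigma> (map \<Psi> xs) (phii a))"
      by (simp add: phii_mult)
  qed
next
  fix xs :: "'f list" and u w assume l: "length xs = r - 2"
  have "\<sigma> (map \<Psi> xs) (ipE (\<Psi> u) (\<Psi> w)) = ipE (f (map \<Psi> xs @ [\<Psi> u])) (\<Psi> w) + ipE (\<Psi> u) (f (map \<Psi> xs @ [\<Psi> w]))"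
    using S l by (simp add: is_symbol_def)
  then show "\<phi> (\<sigma> (map \<Psi> xs) (phii (ipF u w))) = ipF (\<Phi> (f (map \<Psi> (xs @ [u])))) w + ipF u (\<Phi> (f (map \<Psi> (xs @ [w]))))"
    by (simp add: Psi_isom)
next
  fix xs ys :: "'f list" and x y u assume l: "length xs + length ys + 2 = r - 1"
  have "ipE (f (map \<Psi> xs @ \<Psi> x # \<Psi> y # map \<Psi> ys) + f (map \<Psi> xs @ \<Psi> y # \<Psi> x # map \<Psi> ys)) (\<Psi> u)
      = \<sigma> (map \<Psi> xs @ map \<Psi> ys @ [\<Psi> u]) (ipE (\<Psi> x) (\<Psi> y))"
    using S l by (simp add: is_symbol_def)
  then have "\<phi> (ipE (f (map \<Psi> xs @ \<Psi> x # \<Psi> y # map \<Psi> ys) + f (map \<Psi> xs @ \<Psi> y # \<Psi> x # map \<Psi> ys)) (\<Psi> u))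
      = \<phi> (\<sigma> (map \<Psi> xs @ map \<Psi> ys @ [\<Psi> u]) (ipE (\<Psi> x) (\<Psi> y)))" by simp
  then show "ipF (\<Phi> (f (map \<Psi> (xs @ x # y # ys))) + \<Phi> (f (map \<Psi> (xs @ y # x # ys)))) u =
       \<phi> (\<sigma> (map \<Psi> (xs @ ys @ [u])) (phii (ipF x y)))"
    by (simp add: Psi_isom del: Phi_isomr) (metis Phi_isomr Phi_addr Phi_Psi)
qed

abbreviation "P \<equiv> Phistar \<phi> \<Phi>"

lemma Cset_tr: "D \<in> Cset \<iota>A smulE ipE k \<Longrightarrow> P D \<in> Cset \<iota>B smulF ipF k"
proof -
  assume D: "D \<in> Cset \<iota>A smulE ipE k"
  consider "k < 0" | "k = 0" | "k = 1" | "2 \<le> k" by linarith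
  then show ?thesis
  proof cases
    case 1 then show ?thesis using D by (simp add: Cset_neg)
  next
    case 2 then show ?thesis using D by (auto simp: Cset_0)
  next
    case 3 then show ?thesis using D by (auto simp: Cset_1)
  next
    case 4
    then obtain f \<sigma> where f: "D = Op f" and m: "multilin (\<lambda>c x. smulE (\<iota>A c) x) (\<lambda>c x. smulE (\<iota>A c) x) (nat k - 1) f"
      and s: "is_symbol \<iota>A smulE ipE (nat k) f \<sigma>" using D by (auto simp: Cset_ge2)
    show ?thesis using 4 f multilin_tr[OF m] symbol_tr[OF s] by (auto simp: Cset_ge2)
  qed
qed

lemma P_cadd: "P (cadd D D') = cadd (P D) (P D')"
  by (cases D; cases D') auto
lemma P_cneg: "P (cneg D) = cneg (P D)"
  by (cases D) auto
lemma P_csign: "P (csign k D) = csign k (P D)"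
  by (simp add: csign_def P_cneg)
lemma P_cins: "P (cins r x D) = cins r (\<Phi> x) (P D)"
  by (cases D) (auto simp: comp_def)
lemma P_czero: "P (czero k) = czero k"
  by (simp add: czero_def)
lemma P_inj: "inj P"
proof (rule injI)
  fix D D' assume e: "P D = P D'"
  show "D = D'"
  proof (cases D; cases D')
    fix f g assume fg: "D = Op f" "D' = Op g"
    then have "\<And>ys. \<Phi> (f (map \<Psi> ys)) = \<Phi> (g (map \<Psi> ys))" using e by (simp add: fun_eq_iff)
    then have "\<Phi> (f (map \<Psi> (map \<Phi> xs))) = \<Phi> (g (map \<Psi> (map \<Phi> xs)))" for xs by blast
    then have "f xs = g xs" for xs by (simp add: comp_def Phi_inj)
    then show ?thesis using fg by (simp add: fun_eq_iff)
  qed (use e in \<open>auto simp: Phi_inj phi_inj\<close>)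
qed
lemma P_P: "Phistar phii \<Psi> (P D) = D"
  using Phi_bij by (cases D) (auto simp: inv_inv_eq comp_def)

lemma P_bij: "bij_betw P (Cset \<iota>A smulE ipE k) (Cset \<iota>B smulF ipF k)"
proof -
  interpret I: transp \<iota>B \<iota>A smulF ipF smulE ipE phii \<Psi> by (rule transp_inv)
  have ii: "inv phii = \<phi>" "inv \<Psi> = \<Phi>" using phi_bij Phi_bij by (auto simp: inv_inv_eq)
  show ?thesis unfolding bij_betw_def
  proof (intro conjI)
    show "inj_on P (Cset \<iota>A smulE ipE k)" using P_inj by (simp add: inj_on_def inj_def)
    show "P ` Cset \<iota>A smulE ipE k = Cset \<iota>B smulF ipF k"
    proof (intro equalityI subsetI)
      fix D assume "D \<in> P ` Cset \<iota>A smulE ipE k" then show "D \<in> Cset \<iota>B smulF ipF k" using Cset_tr by auto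
    next
      fix D assume D: "D \<in> Cset \<iota>B smulF ipF k"
      have "Phistar phii \<Psi> D \<in> Cset \<iota>A smulE ipE k" using I.Cset_tr[OF D] .
      moreover have "P (Phistar phii \<Psi> D) = D" using I.P_P[of D] ii by simp
      ultimately show "D \<in> P ` Cset \<iota>A smulE ipE k" by (metis image_eqI)
    qed
  qed
qed

end

locale poiss = transp \<iota>A \<iota>B smulE ipE smulF ipF \<phi> \<Phi>
  for \<iota>A :: "'r::comm_ring_1 \<Rightarrow> 'a::comm_ring_1" and \<iota>B :: "'r \<Rightarrow> 'b::comm_ring_1"
    and smulE :: "'a \<Rightarrow> 'e::ab_group_add \<Rightarrow> 'e" and ipE :: "'e \<Rightarrow> 'e \<Rightarrow> 'a"
    and smulF :: "'b \<Rightarrow> 'f::ab_group_add \<Rightarrow> 'f" and ipF :: "'f \<Rightarrow> 'f \<Rightarrow> 'b"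
    and \<phi> :: "'a \<Rightarrow> 'b" and \<Phi> :: "'e \<Rightarrow> 'f" +
  fixes brE wdE :: "int \<Rightarrow> int \<Rightarrow> ('a, 'e) coch \<Rightarrow> ('a, 'e) coch \<Rightarrow> ('a, 'e) coch"
    and brF wdF :: "int \<Rightarrow> int \<Rightarrow> ('b, 'f) coch \<Rightarrow> ('b, 'f) coch \<Rightarrow> ('b, 'f) coch"
  assumes modF: "ipmod smulF ipF"
    and brE: "is_bracket \<iota>A smulE ipE brE" and wdE: "is_wedge \<iota>A smulE ipE brE wdE"
    and brF: "is_bracket \<iota>B smulF ipF brF" and wdF: "is_wedge \<iota>B smulF ipF brF wdF"
begin

abbreviation "CE \<equiv> Cset \<iota>A smulE ipE"
abbreviation "CF \<equiv> Cset \<iota>B smulF ipF"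

lemma B1: assumes C: "C \<in> CE r" shows "P (brE r 1 C (Vc x)) = brF r 1 (P C) (Vc (\<Phi> x))"
proof -
  have V: "Vc x \<in> CE 1" by (simp add: Cset_1)
  have V': "Vc (\<Phi> x) \<in> CF 1" by (simp add: Cset_1)
  have PC: "P C \<in> CF r" using Cset_tr[OF C] .
  consider "r < 0" | "r = 0" | "r = 1" | "2 \<le> r" by linarith
  then show ?thesis
  proof cases
    case 1 then show ?thesis
      using br_zeroL[OF brE 1 C V] br_zeroL[OF brF 1 PC V'] by (simp add: P_czero)
  next
    case 2
    have a: "brE r 1 C (Vc x) \<in> CE (r + 1 - 2)" by (rule br_closed[OF brE C V])
    have b: "brF r 1 (P C) (Vc (\<Phi> x)) \<in> CF (r + 1 - 2)" by (rule br_closed[OF brF PC V'])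
    show ?thesis using a b 2 by (simp add: Cset_neg)
  next
    case 3
    then obtain y where "C = Vc y" using C by (auto simp: Cset_1)
    then show ?thesis using 3 by (simp add: br11[OF brE] br11[OF brF])
  next
    case 4
    then show ?thesis using brins[OF brE 4 C] brins[OF brF 4 PC] by (simp add: P_cins)
  qed
qed

lemma B_all: "C1 \<in> CE r \<Longrightarrow> C2 \<in> CE s \<Longrightarrow> P (brE r s C1 C2) = brF r s (P C1) (P C2)"
proof (induction "nat (r + s)" arbitrary: r s C1 C2 rule: less_induct)
  case less
  note C1 = less.prems(1) and C2 = less.prems(2)
  have PC1: "P C1 \<in> CF r" using Cset_tr[OF C1] .
  have PC2: "P C2 \<in> CF s" using Cset_tr[OF C2] .
  consider "r < 0" | "s < 0" | "0 \<le> r" "0 \<le> s" "r + s < 2" | "0 \<le> r" "0 \<le> s" "r + s = 2" | "r + s \<ge> 3" by linarith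
  then show ?case
  proof cases
    case 1 then show ?thesis
      using br_zeroL[OF brE 1 C1 C2] br_zeroL[OF brF 1 PC1 PC2] by (simp add: P_czero)
  next
    case 2 then show ?thesis
      using br_zeroR[OF brE 2 C1 C2] br_zeroR[OF brF 2 PC1 PC2] by (simp add: P_czero)
  next
    case 3
    have a: "brE r s C1 C2 \<in> CE (r + s - 2)" by (rule br_closed[OF brE C1 C2])
    have b: "brF r s (P C1) (P C2) \<in> CF (r + s - 2)" by (rule br_closed[OF brF PC1 PC2])
    show ?thesis using a b 3 by (simp add: Cset_neg)
  next
    case 4
    then consider "r = 0" "s = 2" | "r = 1" "s = 1" | "r = 2" "s = 0" by linarith
    then show ?thesis
    proof cases
      case 1
      then obtain a where a: "C1 = Sc a" using C1 by (auto simp: Cset_0)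
      obtain f \<sigma> where f: "C2 = Op f" and s: "is_symbol \<iota>A smulE ipE 2 f \<sigma>" using C2 1 by (auto simp: Cset_ge2)
      have PO: "Op (\<lambda>ys. \<Phi> (f (map \<Psi> ys))) \<in> CF 2" using PC2 f 1 by simp
      show ?thesis using 1 a f br20[OF brE, of f \<sigma> a] C2 s
          br20[OF brF PO symbol_tr[OF s], of "\<phi> a"] by simp
    next
      case 2
      then obtain x y where "C1 = Vc x" "C2 = Vc y" using C1 C2 by (auto simp: Cset_1)
      then show ?thesis using 2 by (simp add: br11[OF brE] br11[OF brF])
    next
      case 3
      then obtain a where a: "C2 = Sc a" using C2 by (auto simp: Cset_0)
      obtain f \<sigma> where f: "C1 = Op f" and s: "is_symbol \<iota>A smulE ipE 2 f \<sigma>" using C1 3 by (auto simp: Cset_ge2)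
      have PO: "Op (\<lambda>ys. \<Phi> (f (map \<Psi> ys))) \<in> CF 2" using PC1 f 3 by simp
      show ?thesis using 3 a f br20[OF brE, of f \<sigma> a] C1 s
          br20[OF brF PO symbol_tr[OF s], of "\<phi> a"] by simp
    qed
  next
    case 5
    define k where "k = r + s - 2"
    have k1: "1 \<le> k" using 5 k_def by simp
    have D: "brE r s C1 C2 \<in> CE k" unfolding k_def by (rule br_closed[OF brE C1 C2])
    have PD: "P (brE r s C1 C2) \<in> CF k" using Cset_tr[OF D] .
    have D': "brF r s (P C1) (P C2) \<in> CF k" unfolding k_def by (rule br_closed[OF brF PC1 PC2])
    show ?thesis
    proof (rule determined[OF brF modF k1 PD D'], intro allI)
      fix y
      define x where "x = \<Psi> y"
      have y: "y = \<Phi> x" by (simp add: x_def)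
      have V: "Vc x \<in> CE 1" by (simp add: Cset_1)
      have e1: "brE r 1 C1 (Vc x) \<in> CE (r - 1)" using br_closed[OF brE C1 V] by simp
      have e2: "brE s 1 C2 (Vc x) \<in> CE (s - 1)" using br_closed[OF brE C2 V] by simp
      have IH1: "P (brE (r - 1) s (brE r 1 C1 (Vc x)) C2) = brF (r - 1) s (P (brE r 1 C1 (Vc x))) (P C2)"
        by (rule less.hyps[OF _ e1 C2]) (use 5 in simp)
      have IH2: "P (brE r (s - 1) C1 (brE s 1 C2 (Vc x))) = brF r (s - 1) (P C1) (P (brE s 1 C2 (Vc x)))"
        by (rule less.hyps[OF _ C1 e2]) (use 5 in simp)
      have "brF k 1 (P (brE r s C1 C2)) (Vc y) = P (brE k 1 (brE r s C1 C2) (Vc x))"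
        using B1[OF D, of x] y by simp
      also have "\<dots> = P (cadd (csign s (brE (r - 1) s (brE r 1 C1 (Vc x)) C2)) (brE r (s - 1) C1 (brE s 1 C2 (Vc x))))"
        unfolding k_def by (rule arg_cong[where f=P], rule brder[OF brE C1 C2])
      also have "\<dots> = cadd (csign s (brF (r - 1) s (brF r 1 (P C1) (Vc y)) (P C2))) (brF r (s - 1) (P C1) (brF s 1 (P C2) (Vc y)))"
        by (simp add: P_cadd P_csign IH1 IH2 B1[OF C1] B1[OF C2] y)
      also have "\<dots> = brF k 1 (brF r s (P C1) (P C2)) (Vc y)"
        unfolding k_def by (rule brder[OF brF PC1 PC2, symmetric])
      finally show "brF k 1 (P (brE r s C1 C2)) (Vc y) = brF k 1 (brF r s (P C1) (P C2)) (Vc y)" .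
    qed
  qed
qed

lemma W_all: "C1 \<in> CE r \<Longrightarrow> C2 \<in> CE s \<Longrightarrow> P (wdE r s C1 C2) = wdF r s (P C1) (P C2)"
proof (induction "nat (r + s)" arbitrary: r s C1 C2 rule: less_induct)
  case less
  note C1 = less.prems(1) and C2 = less.prems(2)
  have PC1: "P C1 \<in> CF r" using Cset_tr[OF C1] .
  have PC2: "P C2 \<in> CF s" using Cset_tr[OF C2] .
  consider "r < 0" | "s < 0" | "r = 0" "s = 0" | "r + s \<ge> 1" by linarith
  then show ?case
  proof cases
    case 1 then show ?thesis
      using wd_zeroL[OF wdE 1 C1 C2] wd_zeroL[OF wdF 1 PC1 PC2] by (simp add: P_czero)
  next
    case 2 then show ?thesis
      using wd_zeroR[OF wdE 2 C1 C2] wd_zeroR[OF wdF 2 PC1 PC2] by (simp add: P_czero)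
  next
    case 3
    then obtain a b where "C1 = Sc a" "C2 = Sc b" using C1 C2 by (auto simp: Cset_0)
    then show ?thesis using 3 by (simp add: wd00[OF wdE] wd00[OF wdF])
  next
    case 4
    define k where "k = r + s"
    have k1: "1 \<le> k" using 4 k_def by simp
    have D: "wdE r s C1 C2 \<in> CE k" unfolding k_def by (rule wd_closed[OF wdE C1 C2])
    have PD: "P (wdE r s C1 C2) \<in> CF k" using Cset_tr[OF D] .
    have D': "wdF r s (P C1) (P C2) \<in> CF k" unfolding k_def by (rule wd_closed[OF wdF PC1 PC2])
    show ?thesis
    proof (rule determined[OF brF modF k1 PD D'], intro allI)
      fix y
      define x where "x = \<Psi> y"
      have y: "y = \<Phi> x" by (simp add: x_def)
      have V: "Vc x \<in> CE 1" by (simp add: Cset_1)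
      have e1: "brE r 1 C1 (Vc x) \<in> CE (r - 1)" using br_closed[OF brE C1 V] by simp
      have e2: "brE s 1 C2 (Vc x) \<in> CE (s - 1)" using br_closed[OF brE C2 V] by simp
      have IH1: "P (wdE (r - 1) s (brE r 1 C1 (Vc x)) C2) = wdF (r - 1) s (P (brE r 1 C1 (Vc x))) (P C2)"
        by (rule less.hyps[OF _ e1 C2]) (use 4 in simp)
      have IH2: "P (wdE r (s - 1) C1 (brE s 1 C2 (Vc x))) = wdF r (s - 1) (P C1) (P (brE s 1 C2 (Vc x)))"
        by (rule less.hyps[OF _ C1 e2]) (use 4 in simp)
      have "brF k 1 (P (wdE r s C1 C2)) (Vc y) = P (brE k 1 (wdE r s C1 C2) (Vc x))"
        using B1[OF D, of x] y by simp
      also have "\<dots> = P (cadd (csign s (wdE (r - 1) s (brE r 1 C1 (Vc x)) C2)) (wdE r (s - 1) C1 (brE s 1 C2 (Vc x))))"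
        unfolding k_def by (rule arg_cong[where f=P], rule wdder[OF wdE C1 C2])
      also have "\<dots> = cadd (csign s (wdF (r - 1) s (brF r 1 (P C1) (Vc y)) (P C2))) (wdF r (s - 1) (P C1) (brF s 1 (P C2) (Vc y)))"
        by (simp add: P_cadd P_csign IH1 IH2 B1[OF C1] B1[OF C2] y)
      also have "\<dots> = brF k 1 (wdF r s (P C1) (P C2)) (Vc y)"
        unfolding k_def by (rule wdder[OF wdF PC1 PC2, symmetric])
      finally show "brF k 1 (P (wdE r s C1 C2)) (Vc y) = brF k 1 (wdF r s (P C1) (P C2)) (Vc y)" .
    qed
  qed
qed

end

theorem mainTheorem13:
  fixes \<iota>A :: "'r::comm_ring_1 \<Rightarrow> 'a::comm_ring_1" and \<iota>B :: "'r \<Rightarrow> 'b::comm_ring_1"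
    and smulE :: "'a \<Rightarrow> 'e::ab_group_add \<Rightarrow> 'e" and ipE :: "'e \<Rightarrow> 'e \<Rightarrow> 'a"
    and smulF :: "'b \<Rightarrow> 'f::ab_group_add \<Rightarrow> 'f" and ipF :: "'f \<Rightarrow> 'f \<Rightarrow> 'b"
    and brE wdE :: "int \<Rightarrow> int \<Rightarrow> ('a, 'e) coch \<Rightarrow> ('a, 'e) coch \<Rightarrow> ('a, 'e) coch"
    and brF wdF :: "int \<Rightarrow> int \<Rightarrow> ('b, 'f) coch \<Rightarrow> ('b, 'f) coch \<Rightarrow> ('b, 'f) coch"
    and \<phi> :: "'a \<Rightarrow> 'b" and \<Phi> :: "'e \<Rightarrow> 'f"
  assumes QR: "\<forall>n::nat. 0 < n \<longrightarrow> (\<exists>y::'r. of_nat n * y = 1)"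
    and algA: "rhom \<iota>A" and algB: "rhom \<iota>B"
    and modE: "ipmod smulE ipE" and modF: "ipmod smulF ipF"
    and brE: "is_bracket \<iota>A smulE ipE brE" and wdE: "is_wedge \<iota>A smulE ipE brE wdE"
    and brF: "is_bracket \<iota>B smulF ipF brF" and wdF: "is_wedge \<iota>B smulF ipF brF wdF"
    and phi_bij: "bij \<phi>" and phi_hom: "rhom \<phi>" and phi_R: "\<forall>c. \<phi> (\<iota>A c) = \<iota>B c"
    and Phi_bij: "bij \<Phi>"
    and Phi_add: "\<forall>x y. \<Phi> (x + y) = \<Phi> x + \<Phi> y"
    and Phi_along: "\<forall>a x. \<Phi> (smulE a x) = smulF (\<phi> a) (\<Phi> x)"
    and Phi_isom: "\<forall>x y. \<phi> (ipE x y) = ipF (\<Phi> x) (\<Phi> y)"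
  shows "(\<forall>r. 0 \<le> r \<longrightarrow> bij_betw (Phistar \<phi> \<Phi>) (Cset \<iota>A smulE ipE r) (Cset \<iota>B smulF ipF r)) \<and>
         (\<forall>r s C1 C2. 0 \<le> r \<longrightarrow> 0 \<le> s \<longrightarrow>
            C1 \<in> Cset \<iota>A smulE ipE r \<longrightarrow> C2 \<in> Cset \<iota>A smulE ipE s \<longrightarrow>
            Phistar \<phi> \<Phi> (brE r s C1 C2) = brF r s (Phistar \<phi> \<Phi> C1) (Phistar \<phi> \<Phi> C2) \<and>
            Phistar \<phi> \<Phi> (wdE r s C1 C2) = wdF r s (Phistar \<phi> \<Phi> C1) (Phistar \<phi> \<Phi> C2))"
proof -
  interpret poiss \<iota>A \<iota>B smulE ipE smulF ipF \<phi> \<Phi> brE wdE brF wdF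
    by (unfold_locales; (rule assms)?; use assms in blast)
  show ?thesis using P_bij B_all W_all by blast
qed

end
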